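(* Let $n$, $r$, $a$ be positive integers with $n=2r+1$ and $a\ge 2$. Then $$\rho_2(K(n+2a,r+a))\ \ge\ 2^{\lfloor a/2\rfloor}\,\rho_2(K(n,r)).$$
   Context: For integers $n\ge 2r$, the Kneser graph $K(n,r)$ has as vertices the $r$-element subsets of $[n]=\{1,\dots,n\}$, two vertices being adjacent iff they are disjoint. A $2$-packing of a graph $G$ is a set of vertices pairwise at distance at least $3$ in $G$; $\rho_2(G)$ is the maximum cardinality of a $2$-packing. *)

theory Defs
  imports Main
begin

definition kneser_vertices :: "nat \<Rightarrow> nat \<Rightarrow> nat set set" where
  "kneser_vertices n r = {A. A \<subseteq> {1..n} \<and> card A = r}"

definition kneser_adj :: "nat set \<Rightarrow> nat set \<Rightarrow> bool" where
  "kneser_adj A B \<longleftrightarrow> A \<inter> B = {}"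

definition dist_ge3 :: "'a set \<Rightarrow> ('a \<Rightarrow> 'a \<Rightarrow> bool) \<Rightarrow> 'a \<Rightarrow> 'a \<Rightarrow> bool" where
  "dist_ge3 V E u v \<longleftrightarrow> u \<noteq> v \<and> \<not> E u v \<and> \<not> (\<exists>w\<in>V. E u w \<and> E w v)"

definition two_packing :: "'a set \<Rightarrow> ('a \<Rightarrow> 'a \<Rightarrow> bool) \<Rightarrow> 'a set \<Rightarrow> bool" where
  "two_packing V E P \<longleftrightarrow> P \<subseteq> V \<and> (\<forall>u\<in>P. \<forall>v\<in>P. u \<noteq> v \<longrightarrow> dist_ge3 V E u v)"

definition rho2 :: "'a set \<Rightarrow> ('a \<Rightarrow> 'a \<Rightarrow> bool) \<Rightarrow> nat" where
  "rho2 V E = Max (card ` {P. two_packing V E P})"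

definition rho2_kneser :: "nat \<Rightarrow> nat \<Rightarrow> nat" where
  "rho2_kneser n r = rho2 (kneser_vertices n r) kneser_adj"

end

theory Submission
  imports Defs
begin

definition good :: "nat \<Rightarrow> nat set set \<Rightarrow> bool" where
  "good R P \<longleftrightarrow> P \<subseteq> kneser_vertices (2*R+1) R \<and>
     (\<forall>A\<in>P. \<forall>B\<in>P. A \<noteq> B \<longrightarrow> A \<inter> B \<noteq> {} \<and> card (A \<inter> B) + 2 \<le> R)"

lemma kv_finite: "finite (kneser_vertices n r)"
proof -
  have "kneser_vertices n r \<subseteq> Pow {1..n}" by (auto simp: kneser_vertices_def)
  then show ?thesis by (meson finite_Pow_iff finite_atLeastAtMost finite_subset)
qed

lemma common_nb:
  assumes A: "A \<in> kneser_vertices (2*R+1) R" and B: "B \<in> kneser_vertices (2*R+1) R"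
  shows "(\<exists>W\<in>kneser_vertices (2*R+1) R. kneser_adj A W \<and> kneser_adj W B) \<longleftrightarrow> R \<le> card (A \<inter> B) + 1"
proof -
  have As: "A \<subseteq> {1..2*R+1}" "card A = R" and Bs: "B \<subseteq> {1..2*R+1}" "card B = R"
    using A B by (auto simp: kneser_vertices_def)
  have fA: "finite A" "finite B" using As Bs finite_subset by blast+
  have cu: "card (A \<union> B) + card (A \<inter> B) = 2*R" using card_Un_Int[OF fA] As Bs by simp
  have sub: "A \<union> B \<subseteq> {1..2*R+1}" using As Bs by blast
  have cc: "card ({1..2*R+1} - (A \<union> B)) = card (A \<inter> B) + 1"
    using card_Diff_subset[OF finite_subset[OF sub] sub] cu by simp
  show ?thesis
  proof
    assume "\<exists>W\<in>kneser_vertices (2*R+1) R. kneser_adj A W \<and> kneser_adj W B"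
    then obtain W where W: "W \<subseteq> {1..2*R+1}" "card W = R" "A \<inter> W = {}" "W \<inter> B = {}"
      by (auto simp: kneser_vertices_def kneser_adj_def)
    then have "W \<subseteq> {1..2*R+1} - (A \<union> B)" by blast
    then have "card W \<le> card ({1..2*R+1} - (A \<union> B))" by (simp add: card_mono)
    then show "R \<le> card (A \<inter> B) + 1" using W cc by simp
  next
    assume "R \<le> card (A \<inter> B) + 1"
    then obtain W where "W \<subseteq> {1..2*R+1} - (A \<union> B)" "card W = R"
      using obtain_subset_with_card_n[of R "{1..2*R+1} - (A \<union> B)"] cc by auto
    then show "\<exists>W\<in>kneser_vertices (2*R+1) R. kneser_adj A W \<and> kneser_adj W B"
      by (intro bexI[of _ W]) (auto simp: kneser_vertices_def kneser_adj_def)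
  qed
qed

lemma tp_good: "two_packing (kneser_vertices (2*R+1) R) kneser_adj P \<longleftrightarrow> good R P"
proof -
  have eq: "dist_ge3 (kneser_vertices (2*R+1) R) kneser_adj A B \<longleftrightarrow> A \<noteq> B \<and> A \<inter> B \<noteq> {} \<and> card (A \<inter> B) + 2 \<le> R"
    if "A \<in> kneser_vertices (2*R+1) R" "B \<in> kneser_vertices (2*R+1) R" for A B
    unfolding dist_ge3_def common_nb[OF that] by (auto simp: kneser_adj_def)
  show ?thesis
  proof
    assume h: "two_packing (kneser_vertices (2*R+1) R) kneser_adj P"
    then have sub: "P \<subseteq> kneser_vertices (2*R+1) R" by (simp add: two_packing_def)
    show "good R P" unfolding good_def
    proof (intro conjI[OF sub] ballI impI)
      fix A B assume AB: "A \<in> P" "B \<in> P" "A \<noteq> B"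
      then have "dist_ge3 (kneser_vertices (2*R+1) R) kneser_adj A B"
        using h by (simp add: two_packing_def)
      then show "A \<inter> B \<noteq> {} \<and> card (A \<inter> B) + 2 \<le> R"
        using eq[of A B] AB sub by blast
    qed
  next
    assume h: "good R P"
    then have sub: "P \<subseteq> kneser_vertices (2*R+1) R" by (simp add: good_def)
    show "two_packing (kneser_vertices (2*R+1) R) kneser_adj P" unfolding two_packing_def
    proof (intro conjI[OF sub] ballI impI)
      fix A B assume AB: "A \<in> P" "B \<in> P" "A \<noteq> B"
      then have "A \<inter> B \<noteq> {} \<and> card (A \<inter> B) + 2 \<le> R"
        using h by (simp add: good_def)
      then show "dist_ge3 (kneser_vertices (2*R+1) R) kneser_adj A B"
        using eq[of A B] AB sub by blast
    qed
  qed
qed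

lemma step1:
  assumes "good r P"
  shows "\<exists>P'. good (r+1) P' \<and> card P' = card P"
proof -
  let ?f = "insert (2*r+2)"
  have sub: "\<And>A. A \<in> P \<Longrightarrow> A \<subseteq> {1..2*r+1} \<and> card A = r"
    using assms by (auto simp: good_def kneser_vertices_def)
  have nin: "\<And>A. A \<in> P \<Longrightarrow> 2*r+2 \<notin> A" using sub by fastforce
  have fin: "\<And>A. A \<in> P \<Longrightarrow> finite A" using sub finite_subset by blast
  have inj: "inj_on ?f P"
  proof (rule inj_onI)
    fix A B assume "A \<in> P" "B \<in> P" "?f A = ?f B"
    then show "A = B" using nin by (metis insert_ident)
  qed
  have "good (r+1) (?f ` P)"
    unfolding good_def
  proof (intro conjI ballI impI)
    show "?f ` P \<subseteq> kneser_vertices (2 * (r + 1) + 1) (r + 1)"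
      using sub nin fin by (fastforce simp: kneser_vertices_def)
  next
    fix C D assume "C \<in> ?f ` P" "D \<in> ?f ` P" "C \<noteq> D"
    then obtain A B where AB: "A \<in> P" "B \<in> P" "C = ?f A" "D = ?f B" "A \<noteq> B" by blast
    then have "card (A \<inter> B) + 2 \<le> r" using assms by (auto simp: good_def)
    moreover have "C \<inter> D = insert (2*r+2) (A \<inter> B)" using AB by auto
    moreover have "card (insert (2*r+2) (A \<inter> B)) = card (A \<inter> B) + 1"
      using nin[OF AB(1)] fin[OF AB(1)] by simp
    ultimately show "C \<inter> D \<noteq> {}" "card (C \<inter> D) + 2 \<le> r + 1" by auto
  qed
  moreover have "card (?f ` P) = card P" using card_image[OF inj] .
  ultimately show ?thesis by blast
qed

lemma step2:
  assumes "good r P" "r > 0"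
  shows "\<exists>P'. good (r+2) P' \<and> card P' = 2 * card P"
proof -
  define X where "X = {2*r+2, 2*r+3}"
  define Y where "Y = {2*r+4, 2*r+5}"
  let ?f = "\<lambda>A. A \<union> X" and ?g = "\<lambda>A. A \<union> Y"
  have sub: "\<And>A. A \<in> P \<Longrightarrow> A \<subseteq> {1..2*r+1} \<and> card A = r"
    using assms by (auto simp: good_def kneser_vertices_def)
  have ninX: "\<And>A. A \<in> P \<Longrightarrow> A \<inter> X = {}" using sub unfolding X_def by fastforce
  have ninY: "\<And>A. A \<in> P \<Longrightarrow> A \<inter> Y = {}" using sub unfolding Y_def by fastforce
  have fin: "\<And>A. A \<in> P \<Longrightarrow> finite A" using sub finite_subset by blast
  have XY: "X \<inter> Y = {}" "card X = 2" "card Y = 2" "finite X" "finite Y" by (auto simp: X_def Y_def)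
  have cX: "\<And>A. A \<in> P \<Longrightarrow> card (A \<union> X) = r + 2"
    using ninX fin sub XY by (simp add: card_Un_disjoint)
  have cY: "\<And>A. A \<in> P \<Longrightarrow> card (A \<union> Y) = r + 2"
    using ninY fin sub XY by (simp add: card_Un_disjoint)
  have injf: "inj_on ?f P"
  proof (rule inj_onI)
    fix A B assume "A \<in> P" "B \<in> P" "?f A = ?f B"
    then have "A = (A \<union> X) - X" "B = (B \<union> X) - X" using ninX by blast+
    then show "A = B" using \<open>A \<union> X = B \<union> X\<close> by simp
  qed
  have injg: "inj_on ?g P"
  proof (rule inj_onI)
    fix A B assume "A \<in> P" "B \<in> P" "?g A = ?g B"
    then have "A = (A \<union> Y) - Y" "B = (B \<union> Y) - Y" using ninY by blast+
    then show "A = B" using \<open>A \<union> Y = B \<union> Y\<close> by simp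
  qed
  have disj: "?f ` P \<inter> ?g ` P = {}"
  proof -
    { fix A B assume "A \<in> P" "B \<in> P" "A \<union> X = B \<union> Y"
      moreover have "2*r+2 \<in> A \<union> X" by (simp add: X_def)
      ultimately have False using ninX ninY sub XY by (auto simp: X_def Y_def) }
    then show ?thesis by blast
  qed
  have gP: "\<And>A B. A \<in> P \<Longrightarrow> B \<in> P \<Longrightarrow> A \<noteq> B \<Longrightarrow> A \<inter> B \<noteq> {} \<and> card (A \<inter> B) + 2 \<le> r"
    using assms(1) by (auto simp: good_def)
  have cross: "\<And>A B. A \<in> P \<Longrightarrow> B \<in> P \<Longrightarrow> (A \<union> X) \<inter> (B \<union> Y) = A \<inter> B"
    using ninX ninY XY by blast
  have same: "\<And>A B Z. A \<in> P \<Longrightarrow> B \<in> P \<Longrightarrow> A \<inter> Z = {} \<Longrightarrow> finite Z \<Longrightarrow> card Z = 2 \<Longrightarrow>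
      A \<noteq> B \<Longrightarrow> (A \<union> Z) \<inter> (B \<union> Z) \<noteq> {} \<and> card ((A \<union> Z) \<inter> (B \<union> Z)) + 2 \<le> r + 2"
  proof -
    fix A B Z assume h: "A \<in> P" "B \<in> P" "A \<inter> Z = {}" "finite Z" "card Z = 2" "A \<noteq> B"
    have e: "(A \<union> Z) \<inter> (B \<union> Z) = (A \<inter> B) \<union> Z" by blast
    have "card ((A \<inter> B) \<union> Z) = card (A \<inter> B) + 2"
      using h fin[OF h(1)] by (subst card_Un_disjoint) auto
    then show "(A \<union> Z) \<inter> (B \<union> Z) \<noteq> {} \<and> card ((A \<union> Z) \<inter> (B \<union> Z)) + 2 \<le> r + 2"
      using gP[OF h(1,2,6)] e by auto
  qed
  have crossok: "\<And>A B. A \<in> P \<Longrightarrow> B \<in> P \<Longrightarrow> A \<inter> B \<noteq> {} \<and> card (A \<inter> B) + 2 \<le> r + 2"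
  proof -
    fix A B assume h: "A \<in> P" "B \<in> P"
    show "A \<inter> B \<noteq> {} \<and> card (A \<inter> B) + 2 \<le> r + 2"
    proof (cases "A = B")
      case True
      then show ?thesis using sub[OF h(1)] assms(2) by auto
    next
      case False
      then show ?thesis using gP[OF h False] by simp
    qed
  qed
  have "good (r+2) (?f ` P \<union> ?g ` P)"
    unfolding good_def
  proof (rule conjI; (intro ballI impI)?)
    show "?f ` P \<union> ?g ` P \<subseteq> kneser_vertices (2 * (r + 2) + 1) (r + 2)"
    proof -
      have el: "\<And>A x. A \<in> P \<Longrightarrow> x \<in> A \<Longrightarrow> 1 \<le> x \<and> x \<le> 2*r+1" using sub by fastforce
      show ?thesis using el cX cY unfolding kneser_vertices_def by (force simp: X_def Y_def)
    qed
  next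
    fix C D assume C: "C \<in> ?f ` P \<union> ?g ` P" and D: "D \<in> ?f ` P \<union> ?g ` P" and "C \<noteq> D"
    from C obtain A where A: "A \<in> P" "C = A \<union> X \<or> C = A \<union> Y" by blast
    from D obtain B where B: "B \<in> P" "D = B \<union> X \<or> D = B \<union> Y" by blast
    have cross': "(A \<union> Y) \<inter> (B \<union> X) = A \<inter> B" using cross[OF B(1) A(1)] by blast
    show "C \<inter> D \<noteq> {} \<and> card (C \<inter> D) + 2 \<le> r + 2"
    proof -
      have c1: ?thesis if h: "C = A \<union> X" "D = B \<union> X"
      proof -
      have "A \<noteq> B" using h \<open>C \<noteq> D\<close> by auto
      then show ?thesis using h same[OF A(1) B(1) ninX[OF A(1)] XY(4) XY(2)] by simp
      qed
      have c2: ?thesis if h: "C = A \<union> X" "D = B \<union> Y"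
        using h cross[OF A(1) B(1)] crossok[OF A(1) B(1)] by simp
      have c3: ?thesis if h: "C = A \<union> Y" "D = B \<union> X"
        using h cross' crossok[OF A(1) B(1)] by simp
      have c4: ?thesis if h: "C = A \<union> Y" "D = B \<union> Y"
      proof -
      have "A \<noteq> B" using h \<open>C \<noteq> D\<close> by auto
      then show ?thesis using h same[OF A(1) B(1) ninY[OF A(1)] XY(5) XY(3)] by simp
      qed
      show ?thesis using A(2) B(2) c1 c2 c3 c4 by blast
    qed
  qed
  moreover have "card (?f ` P \<union> ?g ` P) = 2 * card P"
  proof -
    have "finite P" using assms(1) kv_finite finite_subset unfolding good_def by blast
    then show ?thesis using card_Un_disjoint[OF _ _ disj] card_image[OF injf] card_image[OF injg] by simp
  qed
  ultimately show ?thesis by blast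
qed

lemma grow:
  assumes "good r P" "r > 0"
  shows "\<exists>P'. good (r+a) P' \<and> card P' \<ge> 2 ^ (a div 2) * card P"
using assms proof (induction a arbitrary: r P rule: nat_less_induct)
  case (1 a)
  show ?case
  proof (cases "a < 2")
    case True
    then consider "a = 0" | "a = 1" by linarith
    then show ?thesis
    proof cases
      case 1 then show ?thesis using \<open>good r P\<close> by auto
    next
      case 2 then show ?thesis using step1[OF \<open>good r P\<close>] by auto
    qed
  next
    case False
    then obtain b where b: "a = b + 2" by (metis add.commute le_Suc_ex not_less)
    obtain Q where Q: "good (r+b) Q" "card Q \<ge> 2 ^ (b div 2) * card P"
      using "1.IH"[rule_format, of b r P] b "1.prems" by auto
    obtain Q' where Q': "good (r+b+2) Q'" "card Q' = 2 * card Q"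
      using step2[OF Q(1)] "1.prems"(2) by auto
    have "(a div 2) = Suc (b div 2)" using b by simp
    then have "2 ^ (a div 2) * card P = 2 * (2 ^ (b div 2) * card P)" by simp
    then show ?thesis using Q Q' b by (metis add.assoc mult_le_mono2)
  qed
qed

lemma rho2_attained: "\<exists>P. good R P \<and> card P = rho2_kneser (2*R+1) R"
proof -
  let ?S = "{P. two_packing (kneser_vertices (2*R+1) R) kneser_adj P}"
  have "?S \<subseteq> Pow (kneser_vertices (2*R+1) R)" by (auto simp: two_packing_def)
  then have "finite ?S" using kv_finite finite_subset by blast
  moreover have "{} \<in> ?S" by (simp add: two_packing_def)
  ultimately have "Max (card ` ?S) \<in> card ` ?S" by (intro Max_in) auto
  moreover have "?S = {P. good R P}" using tp_good by auto
  ultimately show ?thesis unfolding rho2_kneser_def rho2_def by auto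
qed

lemma rho2_ge: assumes "good R P" shows "card P \<le> rho2_kneser (2*R+1) R"
proof -
  let ?S = "{P. two_packing (kneser_vertices (2*R+1) R) kneser_adj P}"
  have "?S \<subseteq> Pow (kneser_vertices (2*R+1) R)" by (auto simp: two_packing_def)
  then have "finite ?S" using kv_finite finite_subset by blast
  moreover have "P \<in> ?S" using assms tp_good by auto
  ultimately show ?thesis unfolding rho2_kneser_def rho2_def by (intro Max_ge) auto
qed

theorem corollary4p4:
  fixes n r a :: nat
  assumes "r > 0" and "a \<ge> 2" and "n = 2 * r + 1"
  shows "rho2_kneser (n + 2 * a) (r + a) \<ge> 2 ^ (a div 2) * rho2_kneser n r"
proof -
  obtain P where P: "good r P" "card P = rho2_kneser n r" using rho2_attained assms(3) by blast
  obtain P' where P': "good (r+a) P'" "card P' \<ge> 2 ^ (a div 2) * card P"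
    using grow[OF P(1) assms(1)] by blast
  have "n + 2 * a = 2 * (r + a) + 1" using assms(3) by simp
  then show ?thesis using rho2_ge[OF P'(1)] P'(2) P(2) by simp
qed

end
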